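(* Let $\alpha\ge0$, $\mu\ge0$. There is a positive constant $M$ such that for all $g\in C_B[0,\infty)$, $n\in\mathbb{N}$ and $x\in[0,\infty)$, $$|T_n(g;x)-g(x)|\le M\,\omega_2\!\left(g;\frac12\sqrt{\frac{1}{n^2}x\left(8x^3\alpha^2+4x\alpha+n\right)+\frac{2\mu x}{n}\frac{e_\mu(-nx)}{e_\mu(nx)}}\right)+\omega\!\left(g;\frac{2\alpha x^2}{n}\right).$$
   Context: $C_B[0,\infty)$ denotes the space of uniformly continuous bounded functions on $[0,\infty)$ with sup norm. $\omega(g;\delta)=\sup\{|g(s)-g(t)|: s,t\ge0,\ |s-t|\le\delta\}$ and $\omega_2(f;\delta)=\sup_{0<s\le\delta}\|f(\cdot+2s)-2f(\cdot+s)+f(\cdot)\|_{C_B[0,\infty)}$. For $\mu>-\tfrac12$ define $\gamma_\mu(2k)=\dfrac{2^{2k}k!\,\Gamma(k+\mu+1/2)}{\Gamma(\mu+1/2)}$ and $\gamma_\mu(2k+1)=\dfrac{2^{2k+1}k!\,\Gamma(k+\mu+3/2)}{\Gamma(\mu+1/2)}$, $k\ge0$; $e_\mu(x)=\sum_{k\ge0} x^k/\gamma_\mu(k)$; $\theta_k=0$ if $k$ is even and $\theta_k=1$ if $k$ is odd. Let $h_k^\mu(\xi,\alpha)=\gamma_\mu(k)\sum_{j=0}^{\lfloor k/2\rfloor}\dfrac{\alpha^j\xi^{k-2j}}{j!\,\gamma_\mu(k-2j)}$. For $\alpha\ge0,\mu\ge0$, $n\in\mathbb{N}$ and $x\in[0,\infty)$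 define $$T_n(f;x)=\frac{1}{e^{\alpha x^2}e_\mu(nx)}\sum_{k=0}^\infty \frac{h_k^\mu(n,\alpha)}{\gamma_\mu(k)}x^k f\!\left(\frac{k+2\mu\theta_k}{n}\right).$$ *)

theory Defs
  imports "HOL-Analysis.Analysis"
begin

definition gamma_mu :: "real \<Rightarrow> nat \<Rightarrow> real" where
  "gamma_mu \<mu> k =
     (if even k then
        2 ^ k * fact (k div 2) * Gamma (real (k div 2) + \<mu> + 1/2) / Gamma (\<mu> + 1/2)
      else
        2 ^ k * fact (k div 2) * Gamma (real (k div 2) + \<mu> + 3/2) / Gamma (\<mu> + 1/2))"

definition e_mu :: "real \<Rightarrow> real \<Rightarrow> real" where
  "e_mu \<mu> x = (\<Sum>k. x ^ k / gamma_mu \<mu> k)"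

definition theta :: "nat \<Rightarrow> real" where
  "theta k = (if even k then 0 else 1)"

definition h_mu :: "real \<Rightarrow> nat \<Rightarrow> real \<Rightarrow> real \<Rightarrow> real" where
  "h_mu \<mu> k \<xi> \<alpha> =
     gamma_mu \<mu> k * (\<Sum>j = 0..k div 2. \<alpha> ^ j * \<xi> ^ (k - 2 * j) / (fact j * gamma_mu \<mu> (k - 2 * j)))"

definition T_op :: "real \<Rightarrow> real \<Rightarrow> nat \<Rightarrow> (real \<Rightarrow> real) \<Rightarrow> real \<Rightarrow> real" where
  "T_op \<alpha> \<mu> n f x =
     (1 / (exp (\<alpha> * x\<^sup>2) * e_mu \<mu> (real n * x))) *
     (\<Sum>k. h_mu \<mu> k (real n) \<alpha> / gamma_mu \<mu> k * x ^ k *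
            f ((real k + 2 * \<mu> * theta k) / real n))"

text \<open>C_B[0,oo): uniformly continuous bounded functions on [0,oo)
  (values outside [0,oo) are irrelevant).\<close>
definition CB :: "(real \<Rightarrow> real) set" where
  "CB = {g. uniformly_continuous_on {0..} g \<and> bounded (g ` {0..})}"

definition omega :: "(real \<Rightarrow> real) \<Rightarrow> real \<Rightarrow> real" where
  "omega g \<delta> = Sup {\<bar>g s - g t\<bar> | s t. s \<ge> 0 \<and> t \<ge> 0 \<and> \<bar>s - t\<bar> \<le> \<delta>}"

text \<open>Second order modulus of smoothness; the sup over an empty range
  (delta <= 0) is taken to be 0 (adding 0 does not change it otherwise,
  since all values are nonnegative).\<close>
definition omega2 :: "(real \<Rightarrow> real) \<Rightarrow> real \<Rightarrow> real" where
  "omega2 f \<delta> = Sup ({0} \<union>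
     {\<bar>f (y + 2 * s) - 2 * f (y + s) + f y\<bar> | s y. 0 < s \<and> s \<le> \<delta> \<and> y \<ge> 0})"

end

theory Submission
  imports Defs
begin


lemma Gamma_pos_plus1: "(z::real) > 0 \<Longrightarrow> Gamma (z + 1) = z * Gamma z"
  by (rule Gamma_plus1) (auto elim!: nonpos_Ints_cases)

lemma Gamma_mu_pos: "(\<mu>::real) \<ge> 0 \<Longrightarrow> Gamma (\<mu> + 1/2) > 0"
  by (rule Gamma_real_pos) simp

lemma gamma_mu_0: "(\<mu>::real) \<ge> 0 \<Longrightarrow> gamma_mu \<mu> 0 = 1"
  unfolding gamma_mu_def using Gamma_mu_pos[of \<mu>] by (simp add: less_imp_neq[symmetric])

lemma gamma_mu_Suc:
  assumes "\<mu> \<ge> 0"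
  shows "gamma_mu \<mu> (Suc k) = (real (Suc k) + 2 * \<mu> * theta (Suc k)) * gamma_mu \<mu> k"
proof (cases "even k")
  case True
  then obtain j where k: "k = 2*j" by blast
  have g: "Gamma (real j + \<mu> + 3/2) = (real j + \<mu> + 1/2) * Gamma (real j + \<mu> + 1/2)"
    using Gamma_pos_plus1[of "real j + \<mu> + 1/2"] assms by (simp add: algebra_simps)
  define A where "A = Gamma (real j + \<mu> + 1/2)"
  define G where "G = Gamma (\<mu> + 1/2)"
  have Gp: "G > 0" unfolding G_def using Gamma_mu_pos assms by blast
  have 1: "gamma_mu \<mu> (Suc k) = 2^(Suc k) * fact j * ((real j + \<mu> + 1/2) * A) / G"
    unfolding gamma_mu_def k A_def G_def g[symmetric] by simp
  have 2: "gamma_mu \<mu> k = 2^k * fact j * A / G"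
    unfolding gamma_mu_def k A_def G_def by simp
  have 3: "theta (Suc k) = 1" unfolding theta_def k by simp
  show ?thesis unfolding 1 2 3 using k Gp by (simp add: field_simps)
next
  case False
  then obtain j where k: "k = 2*j+1" by (metis oddE)
  have e: "Suc k = 2 * (j+1)" using k by simp
  define A where "A = Gamma (real j + \<mu> + 3/2)"
  define G where "G = Gamma (\<mu> + 1/2)"
  have Gp: "G > 0" unfolding G_def using Gamma_mu_pos assms by blast
  have g: "real (j+1) + \<mu> + 1/2 = real j + \<mu> + 3/2" by simp
  have 1: "gamma_mu \<mu> (Suc k) = 2^(Suc k) * fact (j+1) * A / G"
    proof -
    have d: "2 * (j + 1) div 2 = j + 1" by simp
    have "real (j + 1) + \<mu> + 1 / 2 = real j + \<mu> + 3/2" by simp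
    then show ?thesis unfolding gamma_mu_def e A_def G_def d by (simp add: add_ac)
  qed
  have 2: "gamma_mu \<mu> k = 2^k * fact j * A / G"
    unfolding gamma_mu_def k A_def G_def by simp
  have 3: "theta (Suc k) = 0" unfolding theta_def e by simp
  show ?thesis unfolding 1 2 3 using k Gp by (simp add: field_simps)
qed

definition beta :: "real \<Rightarrow> nat \<Rightarrow> real" where
  "beta \<mu> m = real m + 2 * \<mu> * theta m"

lemma gamma_mu_ge_fact: "(\<mu>::real) \<ge> 0 \<Longrightarrow> gamma_mu \<mu> k \<ge> fact k"
proof (induction k)
  case 0 then show ?case by (simp add: gamma_mu_0)
next
  case (Suc k)
  have t: "theta (Suc k) \<ge> 0" by (simp add: theta_def)
  have "fact (Suc k) = real (Suc k) * fact k" by simp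
  also have "\<dots> \<le> (real (Suc k) + 2 * \<mu> * theta (Suc k)) * gamma_mu \<mu> k"
    apply (rule mult_mono) using Suc t by auto
  finally show ?case using gamma_mu_Suc[OF Suc.prems] by simp
qed

lemma gamma_mu_pos: "(\<mu>::real) \<ge> 0 \<Longrightarrow> gamma_mu \<mu> k > 0"
  using gamma_mu_ge_fact[of \<mu> k] fact_gt_zero[where 'a=real, of k] by linarith

lemma gamma_mu_Suc_beta: "(\<mu>::real) \<ge> 0 \<Longrightarrow> gamma_mu \<mu> (Suc k) = beta \<mu> (Suc k) * gamma_mu \<mu> k"
  using gamma_mu_Suc unfolding beta_def by simp

lemma E_abs_summable:
  assumes "(\<mu>::real) \<ge> 0"
  shows "summable (\<lambda>m. \<bar>y ^ m / gamma_mu \<mu> m\<bar>)"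
proof (rule summable_comparison_test[OF _ summable_exp[of "\<bar>y\<bar>"]])
  show "\<exists>N. \<forall>n\<ge>N. norm \<bar>y ^ n / gamma_mu \<mu> n\<bar> \<le> inverse (fact n) * \<bar>y\<bar> ^ n"
  proof (intro exI allI impI)
    fix n :: nat
    have g1: "gamma_mu \<mu> n \<ge> fact n" using gamma_mu_ge_fact assms by blast
    have g2: "gamma_mu \<mu> n > 0" using gamma_mu_pos assms by blast
    have f: "(fact n :: real) > 0" by simp
    have "\<bar>y ^ n / gamma_mu \<mu> n\<bar> = \<bar>y\<bar>^n / gamma_mu \<mu> n" using g2 by (simp add: power_abs)
    also have "\<dots> \<le> \<bar>y\<bar>^n / fact n" using g1 f g2 by (intro divide_left_mono) simp_all
    finally show "norm \<bar>y ^ n / gamma_mu \<mu> n\<bar> \<le> inverse (fact n) * \<bar>y\<bar> ^ n"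
      by (simp add: divide_inverse mult.commute)
  qed
qed

lemma E_sums: "(\<mu>::real) \<ge> 0 \<Longrightarrow> (\<lambda>m. y ^ m / gamma_mu \<mu> m) sums e_mu \<mu> y"
  unfolding e_mu_def by (rule summable_sums, rule summable_rabs_cancel, rule E_abs_summable)

lemma beta_0: "beta \<mu> 0 = 0" by (simp add: beta_def theta_def)

lemma beta_E_sums:
  assumes "(\<mu>::real) \<ge> 0"
  shows "(\<lambda>m. beta \<mu> m * (y ^ m / gamma_mu \<mu> m)) sums (y * e_mu \<mu> y)"
proof -
  have "(\<lambda>m. y * (y ^ m / gamma_mu \<mu> m)) sums (y * e_mu \<mu> y)"
    using E_sums[OF assms] by (rule sums_mult)
  moreover have "(\<lambda>m. beta \<mu> (Suc m) * (y ^ Suc m / gamma_mu \<mu> (Suc m))) = (\<lambda>m. y * (y ^ m / gamma_mu \<mu> m))"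
  proof
    fix m
    have "beta \<mu> (Suc m) > 0" by (simp add: beta_def theta_def assms add_pos_nonneg)
    then show "beta \<mu> (Suc m) * (y ^ Suc m / gamma_mu \<mu> (Suc m)) = y * (y ^ m / gamma_mu \<mu> m)"
      using gamma_mu_Suc_beta[OF assms, of m] gamma_mu_pos[OF assms, of m] by (simp add: field_simps)
  qed
  ultimately show ?thesis using sums_Suc_iff[of "\<lambda>m. beta \<mu> m * (y ^ m / gamma_mu \<mu> m)"]
    by (simp add: beta_0)
qed


lemma beta_Suc: "beta \<mu> (Suc m) = beta \<mu> m + 1 + 2 * \<mu> * (-1) ^ m"
  by (cases "even m") (simp_all add: beta_def theta_def)

lemma beta2_E_sums:
  assumes "(\<mu>::real) \<ge> 0"
  shows "(\<lambda>m. (beta \<mu> m)\<^sup>2 * (y ^ m / gamma_mu \<mu> m)) sums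
           (y * (y * e_mu \<mu> y + e_mu \<mu> y + 2 * \<mu> * e_mu \<mu> (- y)))"
proof -
  have s1: "(\<lambda>m. beta \<mu> m * (y ^ m / gamma_mu \<mu> m) + (y ^ m / gamma_mu \<mu> m)
      + 2 * \<mu> * ((-y) ^ m / gamma_mu \<mu> m)) sums (y * e_mu \<mu> y + e_mu \<mu> y + 2 * \<mu> * e_mu \<mu> (- y))"
    by (intro sums_add sums_mult beta_E_sums E_sums assms)
  have s2: "(\<lambda>m. y * (beta \<mu> m * (y ^ m / gamma_mu \<mu> m) + (y ^ m / gamma_mu \<mu> m)
      + 2 * \<mu> * ((-y) ^ m / gamma_mu \<mu> m))) sums (y * (y * e_mu \<mu> y + e_mu \<mu> y + 2 * \<mu> * e_mu \<mu> (- y)))"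
    using s1 by (rule sums_mult)
  have eq: "(\<lambda>m. (beta \<mu> (Suc m))\<^sup>2 * (y ^ Suc m / gamma_mu \<mu> (Suc m))) =
     (\<lambda>m. y * (beta \<mu> m * (y ^ m / gamma_mu \<mu> m) + (y ^ m / gamma_mu \<mu> m)
      + 2 * \<mu> * ((-y) ^ m / gamma_mu \<mu> m)))"
  proof
    fix m
    have bp: "beta \<mu> (Suc m) > 0" by (simp add: beta_def theta_def assms add_pos_nonneg)
    have gp: "gamma_mu \<mu> m > 0" using gamma_mu_pos[OF assms] by blast
    have "(beta \<mu> (Suc m))\<^sup>2 * (y ^ Suc m / gamma_mu \<mu> (Suc m)) = y * (beta \<mu> (Suc m) * (y ^ m / gamma_mu \<mu> m))"
      using gamma_mu_Suc_beta[OF assms, of m] gp bp by (simp add: field_simps power2_eq_square)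
    also have "\<dots> = y * (beta \<mu> m * (y ^ m / gamma_mu \<mu> m) + (y ^ m / gamma_mu \<mu> m)
      + 2 * \<mu> * ((-y) ^ m / gamma_mu \<mu> m))"
      unfolding beta_Suc power_minus[of y m] by (simp add: ring_distribs mult_ac add_divide_distrib)
    finally show "(beta \<mu> (Suc m))\<^sup>2 * (y ^ Suc m / gamma_mu \<mu> (Suc m)) = y * (beta \<mu> m * (y ^ m / gamma_mu \<mu> m) + (y ^ m / gamma_mu \<mu> m)
      + 2 * \<mu> * ((-y) ^ m / gamma_mu \<mu> m))" .
  qed
  have "(\<lambda>m. (beta \<mu> (Suc m))\<^sup>2 * (y ^ Suc m / gamma_mu \<mu> (Suc m))) sums
           (y * (y * e_mu \<mu> y + e_mu \<mu> y + 2 * \<mu> * e_mu \<mu> (- y)))"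
    using s2 by (simp only: eq)
  then have "(\<lambda>m. (beta \<mu> m)\<^sup>2 * (y ^ m / gamma_mu \<mu> m)) sums
           (y * (y * e_mu \<mu> y + e_mu \<mu> y + 2 * \<mu> * e_mu \<mu> (- y)) + (beta \<mu> 0)\<^sup>2 * (y ^ 0 / gamma_mu \<mu> 0))"
    by (rule sums_Suc_iff[THEN iffD1])
  then show ?thesis by (simp add: beta_0)
qed

definition aa :: "real \<Rightarrow> nat \<Rightarrow> real" where
  "aa z i = (if even i then z ^ (i div 2) / fact (i div 2) else 0)"

lemma spread_sums:
  assumes "f sums s"
  shows "(\<lambda>i. if even i then f (i div 2) else 0) sums s"
proof -
  let ?F = "\<lambda>i. if even i then f (i div 2) else 0"
  have "(\<lambda>j. ?F (2*j)) sums s \<longleftrightarrow> ?F sums s"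
  proof (rule sums_mono_reindex)
    show "strict_mono (\<lambda>j::nat. 2 * j)" by (simp add: strict_mono_def)
    fix n assume "n \<notin> range (\<lambda>j::nat. 2 * j)"
    then show "?F n = 0" by (auto elim!: evenE)
  qed
  moreover have "(\<lambda>j. ?F (2*j)) = f" by simp
  ultimately show ?thesis using assms by simp
qed

lemma X0_sums: "(\<lambda>j. z ^ j / fact j) sums exp (z::real)"
  using exp_converges[of z] by (simp add: divide_inverse mult.commute)

lemma fact_Suc_div: "real (Suc j) * (z ^ Suc j / fact (Suc j)) = z * (z ^ j / (fact j :: real))"
proof -
  have "real (Suc j) * (z ^ Suc j / fact (Suc j)) = real (Suc j) * (z * z ^ j / (real (Suc j) * fact j))"
    by (simp only: fact_Suc power_Suc of_nat_mult)
  also have "\<dots> = z * (z ^ j / fact j)"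
  proof -
    have aux: "c \<noteq> 0 \<Longrightarrow> F \<noteq> 0 \<Longrightarrow> c * (z * w / (c * F)) = z * (w / F)" for c F w :: real
      by (simp add: field_simps)
    show ?thesis by (rule aux) simp_all
  qed
  finally show ?thesis .
qed

lemma X1_sums: "(\<lambda>j. real j * (z ^ j / fact j)) sums (z * exp (z::real))"
proof -
  have "(\<lambda>j. z * (z ^ j / fact j)) sums (z * exp z)" using X0_sums by (rule sums_mult)
  moreover have "(\<lambda>j. real (Suc j) * (z ^ Suc j / fact (Suc j))) = (\<lambda>j. z * (z ^ j / fact j))"
    by (rule ext) (rule fact_Suc_div)
  ultimately have "(\<lambda>j. real (Suc j) * (z ^ Suc j / fact (Suc j))) sums (z * exp z)" by simp
  then have "(\<lambda>j. real j * (z ^ j / fact j)) sums (z * exp z + real 0 * (z ^ 0 / fact 0))"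
    by (rule sums_Suc_iff[THEN iffD1])
  then show ?thesis by simp
qed

lemma X2_sums: "(\<lambda>j. (real j)\<^sup>2 * (z ^ j / fact j)) sums (z * (z + 1) * exp (z::real))"
proof -
  have "(\<lambda>j. z * (real j * (z ^ j / fact j) + z ^ j / fact j)) sums (z * (z * exp z + exp z))"
    by (intro sums_mult sums_add X0_sums X1_sums)
  moreover have "(\<lambda>j. (real (Suc j))\<^sup>2 * (z ^ Suc j / fact (Suc j))) = (\<lambda>j. z * (real j * (z ^ j / fact j) + z ^ j / fact j))"
  proof
    fix j
    have "(real (Suc j))\<^sup>2 * (z ^ Suc j / fact (Suc j)) = real (Suc j) * (real (Suc j) * (z ^ Suc j / fact (Suc j)))"
      by (simp add: power2_eq_square)
    also have "\<dots> = real (Suc j) * (z * (z ^ j / fact j))" by (simp only: fact_Suc_div)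
    also have "\<dots> = z * (real j * (z ^ j / fact j) + z ^ j / fact j)" by (simp add: algebra_simps add_divide_distrib)
    finally show "(real (Suc j))\<^sup>2 * (z ^ Suc j / fact (Suc j)) = z * (real j * (z ^ j / fact j) + z ^ j / fact j)" .
  qed
  ultimately have "(\<lambda>j. (real (Suc j))\<^sup>2 * (z ^ Suc j / fact (Suc j))) sums (z * (z * exp z + exp z))" by simp
  then have "(\<lambda>j. (real j)\<^sup>2 * (z ^ j / fact j)) sums (z * (z * exp z + exp z) + (real 0)\<^sup>2 * (z ^ 0 / fact 0))"
    by (rule sums_Suc_iff[THEN iffD1])
  then show ?thesis by (simp add: algebra_simps)
qed

lemma aa0_sums: "aa z sums exp z"
proof -
  have "aa z = (\<lambda>i. if even i then (\<lambda>j. z ^ j / fact j) (i div 2) else 0)"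
    by (rule ext) (simp add: aa_def)
  then show ?thesis using spread_sums[OF X0_sums[of z]] by simp
qed

lemma aa1_sums: "(\<lambda>i. real i * aa z i) sums (2 * (z * exp z))"
proof -
  have "(\<lambda>i. real i * aa z i) = (\<lambda>i. if even i then (\<lambda>j. 2 * (real j * (z ^ j / fact j))) (i div 2) else 0)"
    by (rule ext) (auto simp: aa_def elim!: evenE)
  then show ?thesis using spread_sums[OF sums_mult[OF X1_sums[of z], of 2]] by simp
qed

lemma aa2_sums: "(\<lambda>i. (real i)\<^sup>2 * aa z i) sums (4 * (z * (z + 1) * exp z))"
proof -
  have "(\<lambda>i. (real i)\<^sup>2 * aa z i) = (\<lambda>i. if even i then (\<lambda>j. 4 * ((real j)\<^sup>2 * (z ^ j / fact j))) (i div 2) else 0)"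
    by (rule ext) (auto simp: aa_def power2_eq_square elim!: evenE)
  then show ?thesis using spread_sums[OF sums_mult[OF X2_sums[of z], of 4]] by simp
qed

lemma aa_reindex:
  "(\<Sum>i\<le>k. aa z i * G i) = (\<Sum>j=0..k div 2. z ^ j / fact j * G (2 * j))"
proof -
  have inj: "inj_on (\<lambda>j::nat. 2 * j) {0..k div 2}" by (simp add: inj_on_def)
  have "(\<Sum>j=0..k div 2. z ^ j / fact j * G (2 * j)) = (\<Sum>j=0..k div 2. aa z (2*j) * G (2 * j))"
    by (simp add: aa_def)
  also have "\<dots> = (\<Sum>i\<in>(\<lambda>j. 2 * j) ` {0..k div 2}. aa z i * G i)"
    by (rule sum.reindex[OF inj, symmetric, unfolded comp_def])
  also have "\<dots> = (\<Sum>i\<le>k. aa z i * G i)"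
  proof (rule sum.mono_neutral_left)
    show "(\<lambda>j. 2 * j) ` {0..k div 2} \<subseteq> {..k}" by auto
    show "\<forall>i\<in>{..k} - (\<lambda>j. 2 * j) ` {0..k div 2}. aa z i * G i = 0"
    proof
      fix i assume i: "i \<in> {..k} - (\<lambda>j. 2 * j) ` {0..k div 2}"
      have "odd i"
      proof
        assume "even i"
        then obtain j where "i = 2 * j" by blast
        with i show False by auto
      qed
      then show "aa z i * G i = 0" by (simp add: aa_def)
    qed
  qed simp
  finally show ?thesis by simp
qed

lemma cauchy_nonneg:
  fixes A B :: "nat \<Rightarrow> real"
  assumes "A sums sA" "B sums sB" "\<And>i. A i \<ge> 0" "\<And>i. B i \<ge> 0"
  shows "(\<lambda>k. \<Sum>i\<le>k. A i * B (k - i)) sums (sA * sB)"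
proof -
  have a: "summable (\<lambda>k. norm (A k))" using assms(1,3) by (simp add: sums_summable[OF assms(1)])
  have b: "summable (\<lambda>k. norm (B k))" using assms(2,4) by (simp add: sums_summable[OF assms(2)])
  show ?thesis using Cauchy_product_sums[OF a b] sums_unique[OF assms(1)] sums_unique[OF assms(2)] by simp
qed

lemma aa_nonneg: "z \<ge> 0 \<Longrightarrow> aa z i \<ge> 0" by (simp add: aa_def)

lemma beta_nonneg: "(\<mu>::real) \<ge> 0 \<Longrightarrow> beta \<mu> m \<ge> 0" by (simp add: beta_def theta_def)

lemma theta_sub_even: "2 * j \<le> k \<Longrightarrow> theta (k - 2 * j) = theta k"
  by (simp add: theta_def)

lemma beta_sub_even: "2 * j \<le> k \<Longrightarrow> beta \<mu> k = beta \<mu> (k - 2 * j) + real (2 * j)"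
  by (simp add: beta_def theta_sub_even of_nat_diff)

lemma q_eq:
  assumes "(\<mu>::real) \<ge> 0"
  shows "h_mu \<mu> k (real n) \<alpha> / gamma_mu \<mu> k * x ^ k =
    (\<Sum>j=0..k div 2. (\<alpha> * x\<^sup>2) ^ j / fact j * ((real n * x) ^ (k - 2 * j) / gamma_mu \<mu> (k - 2 * j)))"
proof -
  have gp: "gamma_mu \<mu> k > 0" using gamma_mu_pos[OF assms] by blast
  have "h_mu \<mu> k (real n) \<alpha> / gamma_mu \<mu> k * x ^ k =
     (\<Sum>j = 0..k div 2. \<alpha> ^ j * real n ^ (k - 2 * j) / (fact j * gamma_mu \<mu> (k - 2 * j))) * x ^ k"
    unfolding h_mu_def using gp by simp
  also have "\<dots> = (\<Sum>j = 0..k div 2. \<alpha> ^ j * real n ^ (k - 2 * j) / (fact j * gamma_mu \<mu> (k - 2 * j)) * x ^ k)"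
    by (rule sum_distrib_right)
  also have "\<dots> = (\<Sum>j=0..k div 2. (\<alpha> * x\<^sup>2) ^ j / fact j * ((real n * x) ^ (k - 2 * j) / gamma_mu \<mu> (k - 2 * j)))"
  proof (rule sum.cong[OF refl])
    fix j assume "j \<in> {0..k div 2}"
    then have jk: "2 * j \<le> k" by auto
    have xk: "x ^ k = x ^ (2 * j) * x ^ (k - 2 * j)"
      using jk by (simp add: power_add[symmetric])
    show "\<alpha> ^ j * real n ^ (k - 2 * j) / (fact j * gamma_mu \<mu> (k - 2 * j)) * x ^ k =
          (\<alpha> * x\<^sup>2) ^ j / fact j * ((real n * x) ^ (k - 2 * j) / gamma_mu \<mu> (k - 2 * j))"
      unfolding xk by (simp add: power_mult_distrib power_mult field_simps power_commutes flip: power_mult)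
  qed
  finally show ?thesis .
qed

lemma q_W:
  assumes "(\<mu>::real) \<ge> 0"
  shows "h_mu \<mu> k (real n) \<alpha> / gamma_mu \<mu> k * x ^ k * W (beta \<mu> k) =
    (\<Sum>i\<le>k. aa (\<alpha> * x\<^sup>2) i * ((real n * x) ^ (k - i) / gamma_mu \<mu> (k - i) * W (beta \<mu> (k - i) + real i)))"
proof -
  have "h_mu \<mu> k (real n) \<alpha> / gamma_mu \<mu> k * x ^ k * W (beta \<mu> k) =
    (\<Sum>j=0..k div 2. (\<alpha> * x\<^sup>2) ^ j / fact j * ((real n * x) ^ (k - 2 * j) / gamma_mu \<mu> (k - 2 * j)) * W (beta \<mu> k))"
    unfolding q_eq[OF assms] by (rule sum_distrib_right)
  also have "\<dots> = (\<Sum>j=0..k div 2. (\<alpha> * x\<^sup>2) ^ j / fact j * ((real n * x) ^ (k - 2 * j) / gamma_mu \<mu> (k - 2 * j)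
       * W (beta \<mu> (k - 2 * j) + real (2 * j))))"
  proof (rule sum.cong[OF refl])
    fix j assume "j \<in> {0..k div 2}"
    then have jk: "2 * j \<le> k" by auto
    show "(\<alpha> * x\<^sup>2) ^ j / fact j * ((real n * x) ^ (k - 2 * j) / gamma_mu \<mu> (k - 2 * j)) * W (beta \<mu> k) =
      (\<alpha> * x\<^sup>2) ^ j / fact j * ((real n * x) ^ (k - 2 * j) / gamma_mu \<mu> (k - 2 * j)
       * W (beta \<mu> (k - 2 * j) + real (2 * j)))"
      using beta_sub_even[OF jk, of \<mu>] by simp
  qed
  also have "\<dots> = (\<Sum>i\<le>k. aa (\<alpha> * x\<^sup>2) i * ((real n * x) ^ (k - i) / gamma_mu \<mu> (k - i) * W (beta \<mu> (k - i) + real i)))"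
    by (rule aa_reindex[symmetric])
  finally show ?thesis .
qed

lemma q_sums:
  fixes n :: nat and \<alpha> x :: real
  assumes mu: "(\<mu>::real) \<ge> 0" and al: "\<alpha> \<ge> 0" and x: "x \<ge> 0"
  defines "q \<equiv> \<lambda>k. h_mu \<mu> k (real n) \<alpha> / gamma_mu \<mu> k * x ^ k"
  defines "z \<equiv> \<alpha> * x\<^sup>2" and "y \<equiv> real n * x"
  shows "q sums (exp z * e_mu \<mu> y)"
    and "(\<lambda>k. q k * beta \<mu> k) sums (exp z * (y * e_mu \<mu> y) + 2 * (z * exp z) * e_mu \<mu> y)"
    and "(\<lambda>k. q k * (beta \<mu> k)\<^sup>2) sums
          (exp z * (y * (y * e_mu \<mu> y + e_mu \<mu> y + 2 * \<mu> * e_mu \<mu> (- y)))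
           + 2 * ((2 * (z * exp z)) * (y * e_mu \<mu> y)) + 4 * (z * (z + 1) * exp z) * e_mu \<mu> y)"
proof -
  define bb where "bb = (\<lambda>m. y ^ m / gamma_mu \<mu> m)"
  have z0: "z \<ge> 0" unfolding z_def using al by simp
  have y0: "y \<ge> 0" unfolding y_def using x by simp
  have bb0: "bb m \<ge> 0" for m unfolding bb_def using y0 gamma_mu_pos[OF mu, of m] by simp
  have b0: "beta \<mu> m \<ge> 0" for m using beta_nonneg[OF mu] .
  have a0: "aa z i \<ge> 0" for i using aa_nonneg[OF z0] .
  have bbs: "bb sums e_mu \<mu> y" unfolding bb_def using E_sums[OF mu] .
  have bb1: "(\<lambda>m. beta \<mu> m * bb m) sums (y * e_mu \<mu> y)" unfolding bb_def using beta_E_sums[OF mu] .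
  have bb2: "(\<lambda>m. (beta \<mu> m)\<^sup>2 * bb m) sums (y * (y * e_mu \<mu> y + e_mu \<mu> y + 2 * \<mu> * e_mu \<mu> (- y)))"
    unfolding bb_def using beta2_E_sums[OF mu] .
  have qW: "q k * W (beta \<mu> k) = (\<Sum>i\<le>k. aa z i * (bb (k - i) * W (beta \<mu> (k - i) + real i)))" for k W
    unfolding q_def z_def y_def bb_def by (rule q_W[OF mu])
  have c00: "(\<lambda>k. \<Sum>i\<le>k. aa z i * bb (k - i)) sums (exp z * e_mu \<mu> y)"
    by (rule cauchy_nonneg[OF aa0_sums bbs a0 bb0])
  have c01: "(\<lambda>k. \<Sum>i\<le>k. aa z i * (beta \<mu> (k - i) * bb (k - i))) sums (exp z * (y * e_mu \<mu> y))"
    by (rule cauchy_nonneg[OF aa0_sums bb1 a0]) (simp add: b0 bb0)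
  have c02: "(\<lambda>k. \<Sum>i\<le>k. aa z i * ((beta \<mu> (k - i))\<^sup>2 * bb (k - i))) sums
     (exp z * (y * (y * e_mu \<mu> y + e_mu \<mu> y + 2 * \<mu> * e_mu \<mu> (- y))))"
    by (rule cauchy_nonneg[OF aa0_sums bb2 a0]) (simp add: b0 bb0)
  have c10: "(\<lambda>k. \<Sum>i\<le>k. (real i * aa z i) * bb (k - i)) sums (2 * (z * exp z) * e_mu \<mu> y)"
    by (rule cauchy_nonneg[OF aa1_sums bbs _ bb0]) (simp add: a0)
  have c11: "(\<lambda>k. \<Sum>i\<le>k. (real i * aa z i) * (beta \<mu> (k - i) * bb (k - i))) sums (2 * (z * exp z) * (y * e_mu \<mu> y))"
    by (rule cauchy_nonneg[OF aa1_sums bb1]) (simp_all add: a0 b0 bb0)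
  have c20: "(\<lambda>k. \<Sum>i\<le>k. ((real i)\<^sup>2 * aa z i) * bb (k - i)) sums (4 * (z * (z + 1) * exp z) * e_mu \<mu> y)"
    by (rule cauchy_nonneg[OF aa2_sums bbs _ bb0]) (simp add: a0)
  show "q sums (exp z * e_mu \<mu> y)"
  proof -
    have "q k = (\<Sum>i\<le>k. aa z i * bb (k - i))" for k using qW[of k "\<lambda>_. 1"] by simp
    then have "q = (\<lambda>k. \<Sum>i\<le>k. aa z i * bb (k - i))" by (rule ext)
    then show ?thesis using c00 by simp
  qed
  show "(\<lambda>k. q k * beta \<mu> k) sums (exp z * (y * e_mu \<mu> y) + 2 * (z * exp z) * e_mu \<mu> y)"
  proof -
    have "q k * beta \<mu> k = (\<Sum>i\<le>k. aa z i * (beta \<mu> (k - i) * bb (k - i))) + (\<Sum>i\<le>k. (real i * aa z i) * bb (k - i))" for k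
    proof -
      have "q k * beta \<mu> k = (\<Sum>i\<le>k. aa z i * (bb (k - i) * (beta \<mu> (k - i) + real i)))" using qW[of k "\<lambda>t. t"] by simp
      also have "\<dots> = (\<Sum>i\<le>k. aa z i * (beta \<mu> (k - i) * bb (k - i)) + (real i * aa z i) * bb (k - i))"
        by (rule sum.cong) (simp_all add: algebra_simps)
      finally show ?thesis by (simp add: sum.distrib)
    qed
    then show ?thesis using sums_add[OF c01 c10] by simp
  qed
  show "(\<lambda>k. q k * (beta \<mu> k)\<^sup>2) sums
          (exp z * (y * (y * e_mu \<mu> y + e_mu \<mu> y + 2 * \<mu> * e_mu \<mu> (- y)))
           + 2 * ((2 * (z * exp z)) * (y * e_mu \<mu> y)) + 4 * (z * (z + 1) * exp z) * e_mu \<mu> y)"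
  proof -
    have "q k * (beta \<mu> k)\<^sup>2 = (\<Sum>i\<le>k. aa z i * ((beta \<mu> (k - i))\<^sup>2 * bb (k - i)))
        + 2 * (\<Sum>i\<le>k. (real i * aa z i) * (beta \<mu> (k - i) * bb (k - i)))
        + (\<Sum>i\<le>k. ((real i)\<^sup>2 * aa z i) * bb (k - i))" for k
    proof -
      have "q k * (beta \<mu> k)\<^sup>2 = (\<Sum>i\<le>k. aa z i * (bb (k - i) * (beta \<mu> (k - i) + real i)\<^sup>2))"
        using qW[of k "\<lambda>t. t\<^sup>2"] by simp
      also have "\<dots> = (\<Sum>i\<le>k. aa z i * ((beta \<mu> (k - i))\<^sup>2 * bb (k - i))
          + 2 * ((real i * aa z i) * (beta \<mu> (k - i) * bb (k - i)))
          + ((real i)\<^sup>2 * aa z i) * bb (k - i))"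
        by (rule sum.cong) (simp_all add: algebra_simps power2_eq_square)
      finally show ?thesis by (simp add: sum.distrib sum_distrib_left)
    qed
    then show ?thesis using sums_add[OF sums_add[OF c02 sums_mult[OF c11, of 2]] c20] by simp
  qed
qed



lemma half_aux: "\<bar>(a::real) - 2*b + z\<bar> \<le> w \<Longrightarrow> \<bar>a\<bar> \<le> M \<Longrightarrow> z = 0 \<Longrightarrow> \<bar>b\<bar> \<le> (M+w)/2"
  by (simp add: abs_le_iff; linarith)

lemma half_aux2: "\<bar>z - 2*b + (a::real)\<bar> \<le> w \<Longrightarrow> \<bar>a\<bar> \<le> M \<Longrightarrow> z = 0 \<Longrightarrow> \<bar>b\<bar> \<le> (M+w)/2"
  by (simp add: abs_le_iff; linarith)

lemma tri_aux: "\<bar>(a::real)\<bar> \<le> K \<Longrightarrow> \<bar>b\<bar> \<le> K \<Longrightarrow> \<bar>a - b\<bar> \<le> 2*K"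
  by (simp add: abs_le_iff; linarith)

lemma whitney:
  fixes f :: "real \<Rightarrow> real"
  assumes l: "lL > 0" and w: "w \<ge> 0"
  and D: "\<And>y s. c \<le> y \<Longrightarrow> 0 < s \<Longrightarrow> y + 2 * s \<le> c + lL \<Longrightarrow> \<bar>f (y+2 * s) - 2*f (y+s) + f y\<bar> \<le> w"
  and K: "\<And>t. c \<le> t \<Longrightarrow> t \<le> c+lL \<Longrightarrow> \<bar>f t\<bar> \<le> K"
  and p: "c \<le> p" "p \<le> c+lL"
  shows "\<bar>f p - ((c+lL-p) * f c + (p-c) * f (c+lL)) / lL\<bar> \<le> w"
proof -
  define ph where "ph t = f t - ((c+lL-t) * f c + (t-c) * f (c+lL)) / lL" for t
  have phD: "\<bar>ph (y+2 * s) - 2*ph (y+s) + ph y\<bar> \<le> w" if "c \<le> y" "0 < s" "y + 2 * s \<le> c + lL" for y s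
  proof -
    have "ph (y+2 * s) - 2*ph (y+s) + ph y = f (y+2 * s) - 2*f (y+s) + f y"
      unfolding ph_def using l by (simp add: field_simps)
    then show ?thesis using D[OF that] by simp
  qed
  have phc: "ph c = 0" unfolding ph_def using l by simp
  have phe: "ph (c+lL) = 0" unfolding ph_def using l by simp
  have phK: "\<bar>ph t\<bar> \<le> 2*K" if "c \<le> t" "t \<le> c+lL" for t
  proof -
    have K0: "\<bar>f c\<bar> \<le> K" "\<bar>f (c+lL)\<bar> \<le> K" "\<bar>f t\<bar> \<le> K" using K l that by auto
    have "\<bar>(c+lL-t) * f c\<bar> \<le> (c+lL-t) * K" using K0 that by (simp add: abs_mult mult_left_mono)
    moreover have "\<bar>(t-c) * f (c+lL)\<bar> \<le> (t-c) * K" using K0 that by (simp add: abs_mult mult_left_mono)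
    ultimately have "\<bar>(c+lL-t) * f c + (t-c) * f (c+lL)\<bar> \<le> lL * K" by (simp add: algebra_simps)
    then have "\<bar>((c+lL-t) * f c + (t-c) * f (c+lL)) / lL\<bar> \<le> K" using l by (simp add: divide_le_eq mult.commute)
    then show ?thesis unfolding ph_def by (rule tri_aux[OF K0(3)])
  qed
  define A where "A = (\<lambda>t. \<bar>ph t\<bar>) ` {c..c+lL}"
  define M where "M = Sup A"
  have bdd: "bdd_above A" unfolding A_def using phK by (intro bdd_aboveI[of _ "2*K"]) auto
  have ne: "A \<noteq> {}" unfolding A_def using l by auto
  have up: "\<bar>ph t\<bar> \<le> M" if "c \<le> t" "t \<le> c+lL" for t
    unfolding M_def by (rule cSup_upper[OF _ bdd]) (use that in \<open>auto simp: A_def\<close>)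
  have M0: "M \<ge> 0" using up[of c] phc l by simp
  have half: "\<bar>ph t\<bar> \<le> (M + w)/2" if t: "c \<le> t" "t \<le> c+lL" for t
  proof (cases "t \<le> c + lL/2")
    case True
    show ?thesis
    proof (cases "t = c")
      case True then show ?thesis using phc M0 w by simp
    next
      case False
      then have "0 < t - c" using t by simp
      from phD[OF order_refl this] True have "\<bar>ph (2*t - c) - 2*ph t + ph c\<bar> \<le> w"
        by (simp add: algebra_simps)
      moreover have "\<bar>ph (2*t - c)\<bar> \<le> M" using up True t by simp
      ultimately show ?thesis using phc by (rule half_aux)
    qed
  next
    case False
    show ?thesis
    proof (cases "t = c + lL")
      case True then show ?thesis using phe M0 w by simp
    next
      case F2: False
      then have s0: "0 < c + lL - t" using t by simp
      have y0: "c \<le> 2*t - c - lL" using False by simp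
      from phD[OF y0 s0] have "\<bar>ph (c + lL) - 2*ph t + ph (2*t - c - lL)\<bar> \<le> w"
        by (simp add: algebra_simps)
      moreover have "\<bar>ph (2*t - c - lL)\<bar> \<le> M" using up y0 t by simp
      ultimately show ?thesis using phe by (rule half_aux2)
    qed
  qed
  have "\<And>a. a \<in> A \<Longrightarrow> a \<le> (M + w)/2" using half by (auto simp: A_def)
  from cSup_least[OF ne this] have "M \<le> (M + w)/2" unfolding M_def .
  then have "M \<le> w" by simp
  then show ?thesis using up[OF p] unfolding ph_def by simp
qed

lemma seq_bound:
  fixes e :: "nat \<Rightarrow> real"
  assumes e0: "e 0 = 0" and e1: "\<bar>e 1\<bar> \<le> w"
    and D: "\<And>m. m + 2 \<le> N \<Longrightarrow> \<bar>e (m+2) - 2*e (m+1) + e m\<bar> \<le> w"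
  shows "m \<le> N \<Longrightarrow> \<bar>e m\<bar> \<le> (real m)\<^sup>2 * w"
proof -
  have w0: "w \<ge> 0" using e1 by linarith
  have step: "m + 1 \<le> N \<Longrightarrow> \<bar>e (m+1) - e m\<bar> \<le> real (m+1) * w" for m
  proof (induction m)
    case 0 then show ?case using e0 e1 by simp
  next
    case (Suc m)
    have "\<bar>e (m+1) - e m\<bar> \<le> real (m+1) * w" using Suc by simp
    moreover have "\<bar>e (m+2) - 2*e (m+1) + e m\<bar> \<le> w" using D Suc.prems by simp
    ultimately have "\<bar>e (m+2) - e (m+1)\<bar> \<le> real (m+1) * w + w" by linarith
    then show ?case by (simp add: algebra_simps)
  qed
  show "m \<le> N \<Longrightarrow> \<bar>e m\<bar> \<le> (real m)\<^sup>2 * w"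
  proof (induction m)
    case 0 then show ?case using e0 by simp
  next
    case (Suc m)
    have a: "\<bar>e m\<bar> \<le> (real m)\<^sup>2 * w" using Suc by simp
    have b: "\<bar>e (m+1) - e m\<bar> \<le> real (m+1) * w" using step Suc.prems by simp
    have c0: "(real m)\<^sup>2 + real (m+1) \<le> (real (Suc m))\<^sup>2"
      by (simp add: power2_eq_square algebra_simps)
    have c: "(real m)\<^sup>2 * w + real (m+1) * w \<le> (real (Suc m))\<^sup>2 * w"
      using mult_right_mono[OF c0 w0] by (simp add: algebra_simps)
    show ?case using a b c unfolding abs_le_iff by simp
  qed
qed


lemma tri3_aux: "\<bar>(P::real) - (Q + R)\<bar> \<le> E \<Longrightarrow> \<bar>Q\<bar> \<le> \<bar>P\<bar> + \<bar>R\<bar> + E"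
  by (simp add: abs_le_iff; linarith)

lemma extrap:
  fixes h r lL dq X Y w :: real
  assumes h: "h > 0" and r: "0 \<le> r" "r \<le> h" and l: "lL = h + r"
    and E: "\<bar>dq - (h * X + r * Y) / lL\<bar> \<le> w"
  shows "\<bar>X\<bar> \<le> 2 * \<bar>dq\<bar> + \<bar>Y\<bar> + 2 * w"
proof -
  have lp: "lL > 0" using h r l by simp
  have w0: "w \<ge> 0" using E by linarith
  have "\<bar>lL * dq - (h * X + r * Y)\<bar> \<le> lL * w"
  proof -
    have "lL * dq - (h * X + r * Y) = lL * (dq - (h * X + r * Y) / lL)" using lp by (simp add: field_simps)
    then have "\<bar>lL * dq - (h * X + r * Y)\<bar> = lL * \<bar>dq - (h * X + r * Y) / lL\<bar>" using lp by (simp add: abs_mult)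
    then show ?thesis using E lp by (simp add: mult_left_mono)
  qed
  then have "\<bar>h * X\<bar> \<le> \<bar>lL * dq\<bar> + \<bar>r * Y\<bar> + lL * w" by (rule tri3_aux)
  then have "h * \<bar>X\<bar> \<le> lL * \<bar>dq\<bar> + r * \<bar>Y\<bar> + lL * w"
    using h r lp by (simp add: abs_mult)
  also have "\<dots> \<le> (2*h) * \<bar>dq\<bar> + h * \<bar>Y\<bar> + (2*h) * w"
    using l r w0 by (intro add_mono mult_right_mono) auto
  finally have "h * \<bar>X\<bar> \<le> h * (2 * \<bar>dq\<bar> + \<bar>Y\<bar> + 2 * w)" by (simp add: algebra_simps)
  then show ?thesis using h by simp
qed

lemma fin_aux:
  fixes m :: nat and h s0 w X :: real
  assumes m: "m \<ge> 1" and h: "h > 0" and ms: "real m * h \<le> s0" and w: "w \<ge> 0"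
    and X: "X \<le> 2 * ((real m)\<^sup>2 * w) + (real (m - 1))\<^sup>2 * w + 2 * w"
  shows "X \<le> (3 * s0\<^sup>2 / h\<^sup>2 + 2) * w"
proof -
  have m1: "real (m - 1) = real m - 1" using m by (simp add: of_nat_diff)
  have a: "(real (m - 1))\<^sup>2 \<le> (real m)\<^sup>2" unfolding m1 using m by (intro power_mono) auto
  have b: "real m \<le> s0 / h" using ms h by (simp add: pos_le_divide_eq)
  have c: "(real m)\<^sup>2 \<le> (s0 / h)\<^sup>2" by (rule power_mono[OF b]) simp
  have d: "(real m)\<^sup>2 \<le> s0\<^sup>2 / h\<^sup>2" using c by (simp add: power_divide)
  have "X \<le> (3 * (real m)\<^sup>2 + 2) * w" using X mult_right_mono[OF a w] by (simp add: algebra_simps)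
  also have "\<dots> \<le> (3 * s0\<^sup>2 / h\<^sup>2 + 2) * w" using d w by (intro mult_right_mono) auto
  finally show ?thesis .
qed

lemma dev_bound:
  fixes g :: "real \<Rightarrow> real"
  assumes B: "\<And>t. t \<ge> 0 \<Longrightarrow> \<bar>g t\<bar> \<le> B"
  and u: "u \<ge> 0" and h: "h > 0" and t: "t \<ge> 0"
  and D: "\<And>y s. y \<ge> 0 \<Longrightarrow> 0 < s \<Longrightarrow> s \<le> h \<Longrightarrow> \<bar>g (y + 2 * s) - 2 * g (y + s) + g y\<bar> \<le> w"
  shows "\<bar>g t - g u - (g (u+h) - g u)/h * (t - u)\<bar> \<le> (3 * (t-u)\<^sup>2 / h\<^sup>2 + 2) * w"
proof -
  define L where "L = (g (u+h) - g u)/h"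
  define dv where "dv x = g x - g u - L * (x - u)" for x
  have w0: "w \<ge> 0" using order_trans[OF abs_ge_zero D[of 0 h]] h by simp
  have dvD: "\<bar>dv (y + 2 * s) - 2 * dv (y + s) + dv y\<bar> \<le> w" if "y \<ge> 0" "0 < s" "s \<le> h" for y s
  proof -
    have "dv (y + 2 * s) - 2 * dv (y + s) + dv y = g (y + 2 * s) - 2 * g (y + s) + g y"
      unfolding dv_def by (simp add: algebra_simps)
    then show ?thesis using D[OF that] by simp
  qed
  have dvu: "dv u = 0" unfolding dv_def by simp
  have dvh: "dv (u + h) = 0" unfolding dv_def L_def using h by simp
  have W: "\<bar>dv p - ((c+lL-p) * dv c + (p-c) * dv (c+lL)) / lL\<bar> \<le> w"
    if c: "c \<ge> 0" "lL > 0" "lL \<le> 2*h" "c \<le> p" "p \<le> c+lL" for c lL p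
  proof (rule whitney[of lL w c dv "2*B + \<bar>L\<bar>*(c+lL+u)"])
    show "lL > 0" "w \<ge> 0" "c \<le> p" "p \<le> c+lL" using c w0 by auto
    show "\<bar>dv (y + 2 * s) - 2 * dv (y + s) + dv y\<bar> \<le> w" if "c \<le> y" "0 < s" "y + 2 * s \<le> c + lL" for y s
      using dvD[of y s] that c by simp
    show "\<bar>dv t'\<bar> \<le> 2*B + \<bar>L\<bar>*(c+lL+u)" if "c \<le> t'" "t' \<le> c+lL" for t'
    proof -
      have 1: "\<bar>g t'\<bar> \<le> B" "\<bar>g u\<bar> \<le> B" using B that c u by auto
      have "\<bar>t' - u\<bar> \<le> c + lL + u" using that c u by auto
      then have 2: "\<bar>L * (t' - u)\<bar> \<le> \<bar>L\<bar>*(c+lL+u)" by (simp add: abs_mult mult_left_mono)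
      have "\<bar>dv t'\<bar> \<le> \<bar>g t'\<bar> + \<bar>g u\<bar> + \<bar>L * (t' - u)\<bar>" unfolding dv_def by linarith
      then show ?thesis using 1 2 by linarith
    qed
  qed
  have R: "\<bar>dv (u + real m * h)\<bar> \<le> (real m)\<^sup>2 * w" for m
  proof -
    define e where "e k = dv (u + real k * h)" for k
    have "\<bar>e m\<bar> \<le> (real m)\<^sup>2 * w"
    proof (rule seq_bound[of e w m m])
      show "e 0 = 0" unfolding e_def using dvu by simp
      show "\<bar>e 1\<bar> \<le> w" unfolding e_def using dvh w0 by simp
      fix m' :: nat assume "m' + 2 \<le> m"
      have "e (m' + 2) - 2 * e (m' + 1) + e m' =
        dv ((u + real m' * h) + 2 * h) - 2 * dv ((u + real m' * h) + h) + dv (u + real m' * h)"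
        unfolding e_def by (simp add: algebra_simps)
      moreover have "u + real m' * h \<ge> 0" using u h by simp
      ultimately show "\<bar>e (m' + 2) - 2 * e (m' + 1) + e m'\<bar> \<le> w"
        using dvD[of "u + real m' * h" h] h by simp
    qed simp
    then show ?thesis unfolding e_def .
  qed
  have Lf: "\<bar>dv (u - real m * h)\<bar> \<le> (real m)\<^sup>2 * w" if N: "u - real N * h \<ge> 0" "m \<le> N" for m N
  proof (cases "N = 0")
    case True then show ?thesis using N dvu by simp
  next
    case False
    then have "real N \<ge> 1" by simp
    then have uh: "u - h \<ge> 0" using N h by (smt (verit) mult_le_cancel_right1)
    define e where "e k = dv (u - real k * h)" for k
    have "\<bar>e m\<bar> \<le> (real m)\<^sup>2 * w"
    proof (rule seq_bound[of e w N m])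
      show "e 0 = 0" unfolding e_def using dvu by simp
      show "\<bar>e 1\<bar> \<le> w"
      proof -
        have "e 1 = g (u - h + 2 * h) - 2 * g (u - h + h) + g (u - h)"
          unfolding e_def dv_def L_def using h by (simp add: field_simps)
        then show ?thesis using D[OF uh h order_refl] by simp
      qed
      show "m \<le> N" by (rule N(2))
      fix m' :: nat assume m': "m' + 2 \<le> N"
      have y0: "u - real (m' + 2) * h \<ge> 0"
      proof -
        have "real (m' + 2) * h \<le> real N * h" using m' h by (intro mult_right_mono) auto
        then show ?thesis using N by linarith
      qed
      have "e (m' + 2) - 2 * e (m' + 1) + e m' =
            dv ((u - real (m' + 2) * h) + 2 * h) - 2 * dv ((u - real (m' + 2) * h) + h) + dv (u - real (m' + 2) * h)"
        unfolding e_def by (simp add: algebra_simps)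
      then show "\<bar>e (m' + 2) - 2 * e (m' + 1) + e m'\<bar> \<le> w"
        using dvD[OF y0 h order_refl] by simp
    qed
    then show ?thesis unfolding e_def .
  qed
  define s0 where "s0 = \<bar>t - u\<bar>"
  define m where "m = nat \<lfloor>s0 / h\<rfloor>"
  have s00: "s0 \<ge> 0" unfolding s0_def by simp
  have mfl: "real m = of_int \<lfloor>s0 / h\<rfloor>" unfolding m_def using s00 h by simp
  have m1: "real m * h \<le> s0"
  proof -
    have "real m \<le> s0 / h" unfolding mfl by (rule of_int_floor_le)
    then show ?thesis using h by (simp add: pos_le_divide_eq)
  qed
  have m2: "s0 < (real m + 1) * h"
  proof -
    have "s0 / h < real m + 1" unfolding mfl by (rule real_of_int_floor_add_one_gt)
    then show ?thesis using h by (simp add: pos_divide_less_eq)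
  qed
  have sq: "s0\<^sup>2 = (t - u)\<^sup>2" unfolding s0_def by simp
  have "\<bar>dv t\<bar> \<le> (3 * s0\<^sup>2 / h\<^sup>2 + 2) * w"
  proof (cases "t \<ge> u")
    case tu: True
    then have s0e: "s0 = t - u" unfolding s0_def by simp
    show ?thesis
    proof (cases "m = 0")
      case True
      then have "t - u < h" using m2 s0e by simp
      then have "\<bar>dv t - ((u+h-t) * dv u + (t-u) * dv (u+h)) / h\<bar> \<le> w"
        using W[of u h t] u h tu by simp
      then have "\<bar>dv t\<bar> \<le> w" using dvu dvh by simp
      also have "w \<le> (3 * s0\<^sup>2 / h\<^sup>2 + 2) * w" using w0 by (simp add: mult_le_cancel_right1 zero_le_divide_iff)
      finally show ?thesis .
    next
      case False
      then have m1': "m \<ge> 1" by simp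
      define c where "c = u + real (m - 1) * h"
      define q where "q = u + real m * h"
      have cq: "q = c + h" unfolding c_def q_def using m1' by (simp add: of_nat_diff algebra_simps)
      have Wc: "\<bar>dv q - ((c + (t - c) - q) * dv c + (q - c) * dv (c + (t - c))) / (t - c)\<bar> \<le> w"
      proof (rule W)
        show "c \<ge> 0" unfolding c_def using u h by simp
        show "t - c > 0" "t - c \<le> 2 * h" "c \<le> q" "q \<le> c + (t - c)"
          using m1 m2 s0e cq h unfolding q_def by (auto simp: algebra_simps)
      qed
      have Wc': "\<bar>dv q - (h * dv t + (t - q) * dv c) / (t - c)\<bar> \<le> w"
        using Wc cq by (simp add: algebra_simps)
      have ex: "\<bar>dv t\<bar> \<le> 2 * \<bar>dv q\<bar> + \<bar>dv c\<bar> + 2 * w"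
        by (rule extrap[OF h _ _ _ Wc']) (use m1 m2 s0e cq q_def in \<open>auto simp: algebra_simps\<close>)
      have "\<bar>dv t\<bar> \<le> 2 * ((real m)\<^sup>2 * w) + (real (m - 1))\<^sup>2 * w + 2 * w"
        using ex R[of m] R[of "m - 1"] unfolding q_def c_def by linarith
      then show ?thesis by (rule fin_aux[OF m1' h m1 w0])
    qed
  next
    case tu: False
    then have s0e: "s0 = u - t" unfolding s0_def by simp
    show ?thesis
    proof (cases "m = 0")
      case True
      then have ut: "u - t < h" using m2 s0e by simp
      have "\<bar>dv u - ((t + (u + h - t) - u) * dv t + (u - t) * dv (t + (u + h - t))) / (u + h - t)\<bar> \<le> w"
        using W[of t "u + h - t" u] t h tu ut by simp
      then have Wc': "\<bar>dv u - (h * dv t + (u - t) * dv (u + h)) / (u + h - t)\<bar> \<le> w" by simp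
      have "\<bar>dv t\<bar> \<le> 2 * \<bar>dv u\<bar> + \<bar>dv (u + h)\<bar> + 2 * w"
        by (rule extrap[OF h _ _ _ Wc']) (use tu ut in auto)
      then have "\<bar>dv t\<bar> \<le> 2 * w" using dvu dvh by simp
      also have "2 * w \<le> (3 * s0\<^sup>2 / h\<^sup>2 + 2) * w" using w0 by (simp add: algebra_simps zero_le_divide_iff)
      finally show ?thesis .
    next
      case False
      then have m1': "m \<ge> 1" by simp
      define b where "b = u - real (m - 1) * h"
      define q where "q = u - real m * h"
      have bq: "b = q + h" unfolding b_def q_def using m1' by (simp add: of_nat_diff algebra_simps)
      have qt: "t \<le> q" unfolding q_def using m1 s0e by simp
      have Wc: "\<bar>dv q - ((t + (b - t) - q) * dv t + (q - t) * dv (t + (b - t))) / (b - t)\<bar> \<le> w"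
      proof (rule W)
        show "t \<ge> 0" by (rule t)
        show "b - t > 0" "b - t \<le> 2 * h" "t \<le> q" "q \<le> t + (b - t)"
          using m1 m2 s0e bq h qt unfolding q_def by (auto simp: algebra_simps)
      qed
      have Wc': "\<bar>dv q - (h * dv t + (q - t) * dv b) / (b - t)\<bar> \<le> w"
        using Wc bq by (simp add: algebra_simps)
      have ex: "\<bar>dv t\<bar> \<le> 2 * \<bar>dv q\<bar> + \<bar>dv b\<bar> + 2 * w"
        by (rule extrap[OF h _ _ _ Wc']) (use m1 m2 s0e bq q_def in \<open>auto simp: algebra_simps\<close>)
      have qq: "u - real m * h \<ge> 0" using qt t unfolding q_def by simp
      have "\<bar>dv t\<bar> \<le> 2 * ((real m)\<^sup>2 * w) + (real (m - 1))\<^sup>2 * w + 2 * w"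
        using ex Lf[OF qq, of m] Lf[OF qq, of "m - 1"] unfolding q_def b_def by simp
      then show ?thesis by (rule fin_aux[OF m1' h m1 w0])
    qed
  qed
  then show ?thesis unfolding sq dv_def L_def .
qed

lemma omega2_ge:
  assumes B: "\<And>t. t \<ge> 0 \<Longrightarrow> \<bar>g t\<bar> \<le> B" and y: "y \<ge> 0" and s: "0 < s" "s \<le> \<delta>"
  shows "\<bar>g (y + 2 * s) - 2 * g (y + s) + g y\<bar> \<le> omega2 g \<delta>"
  unfolding omega2_def
proof (rule cSup_upper)
  show "\<bar>g (y + 2 * s) - 2 * g (y + s) + g y\<bar> \<in> {0} \<union>
     {\<bar>g (y + 2 * s) - 2 * g (y + s) + g y\<bar> | s y. 0 < s \<and> s \<le> \<delta> \<and> y \<ge> 0}" using y s by blast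
  show "bdd_above ({0} \<union> {\<bar>g (y + 2 * s) - 2 * g (y + s) + g y\<bar> | s y. 0 < s \<and> s \<le> \<delta> \<and> y \<ge> 0})"
  proof (rule bdd_aboveI[of _ "4 * B"])
    fix a assume "a \<in> {0} \<union> {\<bar>g (y + 2 * s) - 2 * g (y + s) + g y\<bar> | s y. 0 < s \<and> s \<le> \<delta> \<and> y \<ge> 0}"
    then show "a \<le> 4 * B"
    proof
      assume "a \<in> {0}" then show ?thesis using B[of 0] by auto
    next
      assume "a \<in> {\<bar>g (y + 2 * s) - 2 * g (y + s) + g y\<bar> | s y. 0 < s \<and> s \<le> \<delta> \<and> y \<ge> 0}"
      then obtain s' y' where a: "a = \<bar>g (y' + 2 * s') - 2 * g (y' + s') + g y'\<bar>" "0 < s'" "y' \<ge> 0" by blast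
      have "\<bar>g (y' + 2 * s')\<bar> \<le> B" "\<bar>g (y' + s')\<bar> \<le> B" "\<bar>g y'\<bar> \<le> B" using B a by auto
      then show ?thesis unfolding a(1) by (simp add: abs_le_iff; linarith)
    qed
  qed
qed

lemma omega2_nonneg:
  assumes B: "\<And>t. t \<ge> 0 \<Longrightarrow> \<bar>g t\<bar> \<le> B"
  shows "omega2 g \<delta> \<ge> 0"
  unfolding omega2_def
proof (rule cSup_upper2[of 0])
  show "(0::real) \<in> {0} \<union> {\<bar>g (y + 2 * s) - 2 * g (y + s) + g y\<bar> | s y. 0 < s \<and> s \<le> \<delta> \<and> y \<ge> 0}" by simp
  show "bdd_above ({0} \<union> {\<bar>g (y + 2 * s) - 2 * g (y + s) + g y\<bar> | s y. 0 < s \<and> s \<le> \<delta> \<and> y \<ge> 0})"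
  proof (rule bdd_aboveI[of _ "4 * B"])
    fix a assume "a \<in> {0} \<union> {\<bar>g (y + 2 * s) - 2 * g (y + s) + g y\<bar> | s y. 0 < s \<and> s \<le> \<delta> \<and> y \<ge> 0}"
    then show "a \<le> 4 * B"
    proof
      assume "a \<in> {0}" then show ?thesis using B[of 0] by auto
    next
      assume "a \<in> {\<bar>g (y + 2 * s) - 2 * g (y + s) + g y\<bar> | s y. 0 < s \<and> s \<le> \<delta> \<and> y \<ge> 0}"
      then obtain s' y' where a: "a = \<bar>g (y' + 2 * s') - 2 * g (y' + s') + g y'\<bar>" "0 < s'" "y' \<ge> 0" by blast
      have "\<bar>g (y' + 2 * s')\<bar> \<le> B" "\<bar>g (y' + s')\<bar> \<le> B" "\<bar>g y'\<bar> \<le> B" using B a by auto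
      then show ?thesis unfolding a(1) by (simp add: abs_le_iff; linarith)
    qed
  qed
qed simp

lemma omega_ge:
  assumes B: "\<And>t. t \<ge> 0 \<Longrightarrow> \<bar>g t\<bar> \<le> B" and st: "s \<ge> 0" "t \<ge> 0" "\<bar>s - t\<bar> \<le> \<delta>"
  shows "\<bar>g s - g t\<bar> \<le> omega g \<delta>"
  unfolding omega_def
proof (rule cSup_upper)
  show "\<bar>g s - g t\<bar> \<in> {\<bar>g s - g t\<bar> | s t. s \<ge> 0 \<and> t \<ge> 0 \<and> \<bar>s - t\<bar> \<le> \<delta>}" using st by blast
  show "bdd_above {\<bar>g s - g t\<bar> | s t. s \<ge> 0 \<and> t \<ge> 0 \<and> \<bar>s - t\<bar> \<le> \<delta>}"
  proof (rule bdd_aboveI[of _ "2 * B"])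
    fix a assume "a \<in> {\<bar>g s - g t\<bar> | s t. s \<ge> 0 \<and> t \<ge> 0 \<and> \<bar>s - t\<bar> \<le> \<delta>}"
    then obtain s' t' where a: "a = \<bar>g s' - g t'\<bar>" "s' \<ge> 0" "t' \<ge> 0" by blast
    have "\<bar>g s'\<bar> \<le> B" "\<bar>g t'\<bar> \<le> B" using B a by auto
    then show "a \<le> 2 * B" unfolding a(1) by (simp add: abs_le_iff; linarith)
  qed
qed

lemma abstract_est:
  fixes q t :: "nat \<Rightarrow> real" and g :: "real \<Rightarrow> real"
  assumes q0: "\<And>k. q k \<ge> 0" and qs: "q sums Z" and Z: "Z > 0" and t0: "\<And>k. t k \<ge> 0"
    and q1: "(\<lambda>k. q k * t k) sums (Z * u)" and q2: "(\<lambda>k. q k * (t k)\<^sup>2) sums (Z * (V + u\<^sup>2))"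
    and u: "u \<ge> 0" and VS: "V \<le> S"
    and B: "\<And>t. t \<ge> 0 \<Longrightarrow> \<bar>g t\<bar> \<le> B"
  shows "\<bar>1 / Z * (\<Sum>k. q k * g (t k)) - g u\<bar> \<le> 14 * omega2 g (1/2 * sqrt S)"
proof -
  have qt2: "(\<lambda>k. q k * (t k - u)\<^sup>2) sums (Z * V)"
  proof -
    have "(\<lambda>k. q k * (t k)\<^sup>2 - 2 * u * (q k * t k) + u\<^sup>2 * q k) sums (Z * (V + u\<^sup>2) - 2 * u * (Z * u) + u\<^sup>2 * Z)"
      by (intro sums_add sums_diff sums_mult q1 q2 qs)
    moreover have "(\<lambda>k. q k * (t k)\<^sup>2 - 2 * u * (q k * t k) + u\<^sup>2 * q k) = (\<lambda>k. q k * (t k - u)\<^sup>2)"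
      by (rule ext) (simp add: power2_eq_square algebra_simps)
    moreover have "Z * (V + u\<^sup>2) - 2 * u * (Z * u) + u\<^sup>2 * Z = Z * V" by (simp add: power2_eq_square algebra_simps)
    ultimately show ?thesis by simp
  qed
  have "0 \<le> Z * V" by (rule sums_le[OF _ sums_zero qt2]) (simp add: q0)
  then have V0: "V \<ge> 0" using Z by (simp add: zero_le_mult_iff)
  then have S0: "S \<ge> 0" using VS by simp
  define \<delta> where "\<delta> = 1/2 * sqrt S"
  have d0: "\<delta> \<ge> 0" unfolding \<delta>_def using S0 by simp
  have dS: "4 * \<delta>\<^sup>2 = S" unfolding \<delta>_def using S0 by (simp add: power_divide)
  have w0: "omega2 g \<delta> \<ge> 0" by (rule omega2_nonneg[OF B])
  have gsum: "summable (\<lambda>k. q k * g (t k))"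
  proof (rule summable_comparison_test[OF _ summable_mult[OF sums_summable[OF qs], of B]])
    show "\<exists>N. \<forall>n\<ge>N. norm (q n * g (t n)) \<le> B * q n"
    proof (intro exI allI impI)
      fix n :: nat
      have "q n * \<bar>g (t n)\<bar> \<le> q n * B" using B[OF t0[of n]] q0[of n] by (rule mult_left_mono)
      then show "norm (q n * g (t n)) \<le> B * q n" using q0[of n] by (simp add: abs_mult mult.commute)
    qed
  qed
  define G where "G = (\<Sum>k. q k * g (t k))"
  have Gs: "(\<lambda>k. q k * g (t k)) sums G" unfolding G_def using gsum by (rule summable_sums)
  have main: "\<bar>G - Z * g u\<bar> \<le> Z * (14 * omega2 g \<delta>)"
  proof (cases "\<delta> > 0")
    case True
    define w where "w = omega2 g \<delta>"
    define L where "L = (g (u + \<delta>) - g u) / \<delta>"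
    have dev: "\<bar>g (t k) - g u - L * (t k - u)\<bar> \<le> (3 * (t k - u)\<^sup>2 / \<delta>\<^sup>2 + 2) * w" for k
      unfolding L_def w_def
    proof (rule dev_bound[OF B u True t0[of k]])
      fix y s :: real assume "y \<ge> 0" "0 < s" "s \<le> \<delta>"
      then show "\<bar>g (y + 2 * s) - 2 * g (y + s) + g y\<bar> \<le> omega2 g \<delta>" using omega2_ge[of g B y s \<delta>] B by blast
    qed
    have Ds: "(\<lambda>k. q k * (g (t k) - g u - L * (t k - u))) sums (G - g u * Z - L * (Z * u - u * Z))"
    proof -
      have "(\<lambda>k. q k * g (t k) - g u * q k - L * (q k * t k - u * q k)) sums (G - g u * Z - L * (Z * u - u * Z))"
        by (intro sums_diff sums_mult Gs qs q1)
      moreover have "(\<lambda>k. q k * g (t k) - g u * q k - L * (q k * t k - u * q k)) = (\<lambda>k. q k * (g (t k) - g u - L * (t k - u)))"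
        by (rule ext) (simp add: algebra_simps)
      ultimately show ?thesis by simp
    qed
    have Rs: "(\<lambda>k. q k * ((3 * (t k - u)\<^sup>2 / \<delta>\<^sup>2 + 2) * w)) sums (3 * w / \<delta>\<^sup>2 * (Z * V) + 2 * w * Z)"
    proof -
      have "(\<lambda>k. 3 * w / \<delta>\<^sup>2 * (q k * (t k - u)\<^sup>2) + 2 * w * q k) sums (3 * w / \<delta>\<^sup>2 * (Z * V) + 2 * w * Z)"
        by (intro sums_add sums_mult qt2 qs)
      moreover have "(\<lambda>k. 3 * w / \<delta>\<^sup>2 * (q k * (t k - u)\<^sup>2) + 2 * w * q k) = (\<lambda>k. q k * ((3 * (t k - u)\<^sup>2 / \<delta>\<^sup>2 + 2) * w))"
        by (rule ext) (simp add: algebra_simps)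
      ultimately show ?thesis by simp
    qed
    have le: "\<bar>q k * (g (t k) - g u - L * (t k - u))\<bar> \<le> q k * ((3 * (t k - u)\<^sup>2 / \<delta>\<^sup>2 + 2) * w)" for k
      using dev[of k] q0[of k] by (simp add: abs_mult mult_left_mono)
    have up: "G - g u * Z - L * (Z * u - u * Z) \<le> 3 * w / \<delta>\<^sup>2 * (Z * V) + 2 * w * Z"
      by (rule sums_le[OF _ Ds Rs]) (use le in \<open>simp add: abs_le_iff\<close>)
    have lo: "- (G - g u * Z - L * (Z * u - u * Z)) \<le> 3 * w / \<delta>\<^sup>2 * (Z * V) + 2 * w * Z"
      by (rule sums_le[OF _ sums_minus[OF Ds] Rs]) (use le in \<open>simp add: abs_le_iff\<close>)
    have "\<bar>G - Z * g u\<bar> \<le> 3 * w / \<delta>\<^sup>2 * (Z * V) + 2 * w * Z"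
      using up lo by (simp add: abs_le_iff algebra_simps)
    also have "\<dots> \<le> 3 * w / \<delta>\<^sup>2 * (Z * (4 * \<delta>\<^sup>2)) + 2 * w * Z"
      using VS dS Z w0 True unfolding w_def by (intro add_mono mult_left_mono) auto
    also have "\<dots> = Z * (14 * w)" using True by (simp add: field_simps)
    finally show ?thesis unfolding w_def .
  next
    case False
    then have "\<delta> = 0" using d0 by simp
    then have "S = 0" using dS by simp
    then have "V = 0" using V0 VS by simp
    then have "(\<lambda>k. q k * (t k - u)\<^sup>2) sums 0" using qt2 by simp
    then have "\<forall>k. q k * (t k - u)\<^sup>2 = 0"
      using suminf_eq_zero_iff[of "\<lambda>k. q k * (t k - u)\<^sup>2"] q0 by (simp add: sums_iff)
    then have eq: "q k * g (t k) = g u * q k" for k by (cases "q k = 0") auto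
    have "(\<lambda>k. g u * q k) sums (g u * Z)" by (rule sums_mult[OF qs])
    then have "G = g u * Z" using Gs unfolding eq by (simp add: sums_unique2)
    then show ?thesis using Z w0 by simp
  qed
  have "\<bar>1 / Z * G - g u\<bar> = \<bar>G - Z * g u\<bar> / Z" using Z by (simp add: field_simps)
  also have "\<dots> \<le> 14 * omega2 g \<delta>" using main Z by (simp add: divide_le_eq mult.commute)
  finally show ?thesis unfolding G_def \<delta>_def .
qed



lemma e_mu_ge1: assumes "(\<mu>::real) \<ge> 0" "y \<ge> 0" shows "e_mu \<mu> y \<ge> 1"
proof -
  have s: "summable (\<lambda>m. y ^ m / gamma_mu \<mu> m)" using E_sums[OF assms(1)] by (rule sums_summable)
  have "sum (\<lambda>m. y ^ m / gamma_mu \<mu> m) {0} \<le> (\<Sum>m. y ^ m / gamma_mu \<mu> m)"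
    by (rule sum_le_suminf[OF s]) (use assms gamma_mu_pos in \<open>auto intro!: divide_nonneg_pos\<close>)
  then show ?thesis unfolding e_mu_def using gamma_mu_0[OF assms(1)] by simp
qed

theorem theorem10:
  fixes \<alpha> \<mu> :: real
  assumes "\<alpha> \<ge> 0" and "\<mu> \<ge> 0"
  shows "\<exists>M>0. \<forall>g\<in>CB. \<forall>n::nat. n \<ge> 1 \<longrightarrow> (\<forall>x::real. x \<ge> 0 \<longrightarrow>
    \<bar>T_op \<alpha> \<mu> n g x - g x\<bar>
      \<le> M * omega2 g (1/2 * sqrt (1 / (real n)\<^sup>2 * x * (8 * x ^ 3 * \<alpha>\<^sup>2 + 4 * x * \<alpha> + real n)
                 + 2 * \<mu> * x / real n * (e_mu \<mu> (- real n * x) / e_mu \<mu> (real n * x))))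
        + omega g (2 * \<alpha> * x\<^sup>2 / real n))"
proof (intro exI[of _ 14] conjI ballI allI impI)
  show "(14::real) > 0" by simp
  fix g n x
  assume gC: "g \<in> CB" and n1: "(n::nat) \<ge> 1" and x0: "(x::real) \<ge> 0"
  have al: "\<alpha> \<ge> 0" and mu: "\<mu> \<ge> 0" using assms by auto
  obtain B where B: "\<And>t. t \<ge> 0 \<Longrightarrow> \<bar>g t\<bar> \<le> B"
  proof -
    have "bounded (g ` {0..})" using gC unfolding CB_def by simp
    then obtain a where "\<forall>y\<in>g ` {0..}. norm y \<le> a" unfolding bounded_iff by blast
    then show ?thesis using that[of a] by auto
  qed
  have np: "real n > 0" using n1 by simp
  define z where "z = \<alpha> * x\<^sup>2"
  define y where "y = real n * x"
  define q where "q = (\<lambda>k. h_mu \<mu> k (real n) \<alpha> / gamma_mu \<mu> k * x ^ k)"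
  define t where "t = (\<lambda>k. (real k + 2 * \<mu> * theta k) / real n)"
  define e where "e = e_mu \<mu> y"
  define e' where "e' = e_mu \<mu> (- y)"
  define Z where "Z = exp z * e"
  define u where "u = x + 2 * \<alpha> * x\<^sup>2 / real n"
  define V where "V = x / real n + 4 * \<alpha> * x\<^sup>2 / (real n)\<^sup>2 + 2 * \<mu> * x / real n * (e' / e)"
  define S where "S = 1 / (real n)\<^sup>2 * x * (8 * x ^ 3 * \<alpha>\<^sup>2 + 4 * x * \<alpha> + real n)
                 + 2 * \<mu> * x / real n * (e_mu \<mu> (- real n * x) / e_mu \<mu> (real n * x))"
  have y0: "y \<ge> 0" unfolding y_def using x0 by simp
  have e1: "e \<ge> 1" unfolding e_def by (rule e_mu_ge1[OF mu y0])
  have Zp: "Z > 0" unfolding Z_def using e1 by simp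
  note QS = q_sums[OF mu al x0, of n, folded z_def y_def]
  have q0: "q k \<ge> 0" for k
    unfolding q_def q_eq[OF mu] using al x0 gamma_mu_pos[OF mu]
    by (intro sum_nonneg mult_nonneg_nonneg divide_nonneg_pos) auto
  have qs: "q sums Z" using QS(1) unfolding Z_def e_def q_def .
  have t0: "t k \<ge> 0" for k unfolding t_def theta_def using mu by simp
  have tb: "t k = beta \<mu> k / real n" for k unfolding t_def beta_def ..
  have q1: "(\<lambda>k. q k * t k) sums (Z * u)"
  proof -
    have "(\<lambda>k. q k * beta \<mu> k / real n) sums ((exp z * (y * e) + 2 * (z * exp z) * e) / real n)"
      using sums_divide[OF QS(2), of "real n"] unfolding e_def q_def .
    moreover have "(exp z * (y * e) + 2 * (z * exp z) * e) / real n = Z * u"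
      unfolding Z_def u_def y_def z_def using np by (simp add: field_simps power2_eq_square)
    ultimately show ?thesis unfolding tb by simp
  qed
  have q2: "(\<lambda>k. q k * (t k)\<^sup>2) sums (Z * (V + u\<^sup>2))"
  proof -
    have "(\<lambda>k. q k * (beta \<mu> k)\<^sup>2 / (real n)\<^sup>2) sums
       ((exp z * (y * (y * e + e + 2 * \<mu> * e')) + 2 * ((2 * (z * exp z)) * (y * e)) + 4 * (z * (z + 1) * exp z) * e) / (real n)\<^sup>2)"
      using sums_divide[OF QS(3), of "(real n)\<^sup>2"] unfolding e_def e'_def q_def .
    moreover have "(exp z * (y * (y * e + e + 2 * \<mu> * e')) + 2 * ((2 * (z * exp z)) * (y * e)) + 4 * (z * (z + 1) * exp z) * e) / (real n)\<^sup>2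
        = Z * (V + u\<^sup>2)"
      unfolding Z_def u_def y_def z_def V_def using np e1 by (simp add: field_simps power2_eq_square)
    ultimately show ?thesis unfolding tb by (simp add: power_divide)
  qed
  have VS: "V \<le> S"
  proof -
    have "e_mu \<mu> (- real n * x) = e'" unfolding e'_def y_def by simp
    then have "S = V + 8 * x * x ^ 3 * \<alpha>\<^sup>2 / (real n)\<^sup>2"
      unfolding S_def V_def e_def y_def using np by (simp add: field_simps power2_eq_square)
    moreover have "0 \<le> 8 * x * x ^ 3 * \<alpha>\<^sup>2 / (real n)\<^sup>2" using x0 by simp
    ultimately show ?thesis by simp
  qed
  have u0: "u \<ge> 0" unfolding u_def using x0 al np by simp
  have est: "\<bar>1 / Z * (\<Sum>k. q k * g (t k)) - g u\<bar> \<le> 14 * omega2 g (1/2 * sqrt S)"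
    by (rule abstract_est[OF q0 qs Zp t0 q1 q2 u0 VS B])
  have T: "T_op \<alpha> \<mu> n g x = 1 / Z * (\<Sum>k. q k * g (t k))"
    unfolding T_op_def Z_def e_def z_def y_def q_def t_def ..
  have om: "\<bar>g u - g x\<bar> \<le> omega g (2 * \<alpha> * x\<^sup>2 / real n)"
  proof (rule omega_ge[OF B u0 x0])
    have "u - x = 2 * \<alpha> * x\<^sup>2 / real n" unfolding u_def by simp
    moreover have "2 * \<alpha> * x\<^sup>2 / real n \<ge> 0" using al np by simp
    ultimately show "\<bar>u - x\<bar> \<le> 2 * \<alpha> * x\<^sup>2 / real n" by simp
  qed
  show "\<bar>T_op \<alpha> \<mu> n g x - g x\<bar>
      \<le> 14 * omega2 g (1/2 * sqrt (1 / (real n)\<^sup>2 * x * (8 * x ^ 3 * \<alpha>\<^sup>2 + 4 * x * \<alpha> + real n)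
                 + 2 * \<mu> * x / real n * (e_mu \<mu> (- real n * x) / e_mu \<mu> (real n * x))))
        + omega g (2 * \<alpha> * x\<^sup>2 / real n)"
    using est om unfolding T S_def[symmetric] by linarith
qed

end
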